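(* For $\sigma>0$ let $k_\sigma(x,y) = \exp(-\|x-y\|^2/(2\sigma^2))$ be the Gaussian kernel on $\mathbb R^d$, and let $\langle\cdot,\cdot\rangle_{\sigma'}$ denote the inner product of the RKHS $\mathcal H_{\sigma'}$ of $k_{\sigma'}$. Then for all $x,y,a,b\in\mathbb R^d$, $$\langle k_\sigma(x,\cdot)k_\sigma(y,\cdot),\ k_\sigma(a,\cdot)k_\sigma(b,\cdot)\rangle_{\sigma/\sqrt2} = k_{\sigma\sqrt2}(x,a)\,k_{\sigma\sqrt2}(x,b)\,k_{\sigma\sqrt2}(y,a)\,k_{\sigma\sqrt2}(y,b).$$ *)

theory Defs
  imports "HOL-Analysis.Analysis"
begin

definition gauss_kernel :: "real \<Rightarrow> 'a::euclidean_space \<Rightarrow> 'a \<Rightarrow> real" where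
  "gauss_kernel \<sigma> x y = exp (- ((norm (x - y))\<^sup>2 / (2 * \<sigma>\<^sup>2)))"

text \<open>Kernel sections span: finite linear combinations of k(x_i, .).
  This is the dense pre-Hilbert subspace H_0 of the RKHS of k.\<close>
definition kernel_span :: "('a \<Rightarrow> 'a \<Rightarrow> real) \<Rightarrow> ('a \<Rightarrow> real) set" where
  "kernel_span k = {f. \<exists>(n::nat) c X. f = (\<lambda>z. \<Sum>i<n. c i * k (X i) z)}"

text \<open>This value does not depend on the chosen representations. The inner product
  of the full RKHS (the completion) restricts to this on H_0.\<close>
definition rkhs_inner :: "('a \<Rightarrow> 'a \<Rightarrow> real) \<Rightarrow> ('a \<Rightarrow> real) \<Rightarrow> ('a \<Rightarrow> real) \<Rightarrow> real" where
  "rkhs_inner k f g = (SOME v. \<exists>(n::nat) c X (m::nat) d Y.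
      f = (\<lambda>z. \<Sum>i<n. c i * k (X i) z) \<and> g = (\<lambda>z. \<Sum>j<m. d j * k (Y j) z) \<and>
      v = (\<Sum>i<n. \<Sum>j<m. c i * d j * k (X i) (Y j)))"

end

theory Submission
  imports Defs
begin

lemma sq_id1:
  fixes x y z :: "'a::euclidean_space"
  shows "(norm (x - z))\<^sup>2 + (norm (y - z))\<^sup>2
       = 2 * (norm (scaleR (1/2) (x + y) - z))\<^sup>2 + (norm (x - y))\<^sup>2 / 2"
  by (simp add: power2_norm_eq_inner inner_simps inner_commute algebra_simps) (simp add: add_divide_distrib diff_divide_distrib)

lemma sq_id2:
  fixes x y a b :: "'a::euclidean_space"
  shows "(norm (x - a))\<^sup>2 + (norm (x - b))\<^sup>2 + (norm (y - a))\<^sup>2 + (norm (y - b))\<^sup>2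
       = (norm (x - y))\<^sup>2 + (norm (a - b))\<^sup>2
         + 4 * (norm (scaleR (1/2) (x + y) - scaleR (1/2) (a + b)))\<^sup>2"
  by (simp add: power2_norm_eq_inner inner_simps inner_commute algebra_simps)

lemma ar1:
  fixes A C s :: real assumes "s > 0"
  shows "- ((2 * C + A / 2) / (2 * s\<^sup>2)) = - (A / (4 * s\<^sup>2)) + - (C / (2 * (s\<^sup>2 / 2)))"
  using assms by (simp add: field_simps)

lemma ar2:
  fixes A B C s :: real assumes "s > 0"
  shows "- ((A + B + 4 * C) / (4 * s\<^sup>2)) = - (A / (4 * s\<^sup>2)) + - (B / (4 * s\<^sup>2)) + - (C / (2 * (s\<^sup>2 / 2)))"
  using assms by (simp add: field_simps)

lemma prod_kernel:
  fixes x y z :: "'a::euclidean_space"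
  assumes "\<sigma> > 0"
  shows "gauss_kernel \<sigma> x z * gauss_kernel \<sigma> y z
     = exp (- ((norm (x - y))\<^sup>2 / (4 * \<sigma>\<^sup>2))) * gauss_kernel (\<sigma> / sqrt 2) (scaleR (1/2) (x + y)) z"
proof -
  have s: "(\<sigma> / sqrt 2)\<^sup>2 = \<sigma>\<^sup>2 / 2" by (simp add: power_divide)
  have "gauss_kernel \<sigma> x z * gauss_kernel \<sigma> y z
      = exp (- (((norm (x - z))\<^sup>2 + (norm (y - z))\<^sup>2) / (2 * \<sigma>\<^sup>2)))"
    unfolding gauss_kernel_def by (simp add: exp_add[symmetric] add_divide_distrib)
  also have "\<dots> = exp (- ((norm (x - y))\<^sup>2 / (4 * \<sigma>\<^sup>2)) + - ((norm (scaleR (1/2) (x + y) - z))\<^sup>2 / (2 * (\<sigma> / sqrt 2)\<^sup>2)))"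
    unfolding sq_id1 s using ar1[OF assms] by simp
  also have "\<dots> = exp (- ((norm (x - y))\<^sup>2 / (4 * \<sigma>\<^sup>2))) * gauss_kernel (\<sigma> / sqrt 2) (scaleR (1/2) (x + y)) z"
    unfolding gauss_kernel_def by (rule exp_add)
  finally show ?thesis .
qed

lemma gk_sym: "gauss_kernel s u v = gauss_kernel s v u"
  unfolding gauss_kernel_def by (simp add: norm_minus_commute)

lemma inner_single:
  fixes k :: "'a \<Rightarrow> 'a \<Rightarrow> real"
  assumes sym: "\<And>u v. k u v = k v u"
  shows "rkhs_inner k (\<lambda>z. c1 * k m1 z) (\<lambda>z. c2 * k m2 z) = c1 * c2 * k m1 m2"
proof -
  have key: "v = c1 * c2 * k m1 m2"
    if "(\<lambda>z. c1 * k m1 z) = (\<lambda>z. \<Sum>i<n. c i * k (X i) z)"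
       "(\<lambda>z. c2 * k m2 z) = (\<lambda>z. \<Sum>j<m. d j * k (Y j) z)"
       "v = (\<Sum>i<n. \<Sum>j<m. c i * d j * k (X i) (Y j))"
    for v n c X m d Y
  proof -
    have f: "\<And>z. c1 * k m1 z = (\<Sum>i<n. c i * k (X i) z)" using that(1) by metis
    have g: "\<And>z. c2 * k m2 z = (\<Sum>j<m. d j * k (Y j) z)" using that(2) by metis
    have "v = (\<Sum>i<n. c i * (\<Sum>j<m. d j * k (Y j) (X i)))"
      using that(3) by (simp add: sum_distrib_left mult.assoc sym)
    also have "\<dots> = (\<Sum>i<n. c i * (c2 * k m2 (X i)))" by (simp add: g)
    also have "\<dots> = c2 * (\<Sum>i<n. c i * k (X i) m2)"
      by (simp add: sum_distrib_left sym mult.commute mult.left_commute)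
    also have "\<dots> = c2 * (c1 * k m1 m2)" by (simp add: f)
    finally show ?thesis by simp
  qed
  have ex: "\<exists>(n::nat) c X (m::nat) d Y.
      (\<lambda>z. c1 * k m1 z) = (\<lambda>z. \<Sum>i<n. c i * k (X i) z) \<and> (\<lambda>z. c2 * k m2 z) = (\<lambda>z. \<Sum>j<m. d j * k (Y j) z) \<and>
      c1 * c2 * k m1 m2 = (\<Sum>i<n. \<Sum>j<m. c i * d j * k (X i) (Y j))"
    by (rule exI[of _ 1], rule exI[of _ "\<lambda>_. c1"], rule exI[of _ "\<lambda>_. m1"],
        rule exI[of _ 1], rule exI[of _ "\<lambda>_. c2"], rule exI[of _ "\<lambda>_. m2"]) simp
  show ?thesis unfolding rkhs_inner_def
    by (rule someI2_ex[OF ex]) (use key in blast)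
qed

lemma in_span: "(\<lambda>z. c * k m z) \<in> kernel_span k"
  unfolding kernel_span_def
  by (rule CollectI, rule exI[of _ 1], rule exI[of _ "\<lambda>_. c"], rule exI[of _ "\<lambda>_. m"]) simp

theorem lemma5:
  fixes \<sigma> :: real and x y a b :: "'a::euclidean_space"
  assumes "\<sigma> > 0"
  shows "(\<lambda>z. gauss_kernel \<sigma> x z * gauss_kernel \<sigma> y z) \<in> kernel_span (gauss_kernel (\<sigma> / sqrt 2))
    \<and> (\<lambda>z. gauss_kernel \<sigma> a z * gauss_kernel \<sigma> b z) \<in> kernel_span (gauss_kernel (\<sigma> / sqrt 2))
    \<and> rkhs_inner (gauss_kernel (\<sigma> / sqrt 2))
        (\<lambda>z. gauss_kernel \<sigma> x z * gauss_kernel \<sigma> y z)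
        (\<lambda>z. gauss_kernel \<sigma> a z * gauss_kernel \<sigma> b z)
      = gauss_kernel (\<sigma> * sqrt 2) x a * gauss_kernel (\<sigma> * sqrt 2) x b
        * gauss_kernel (\<sigma> * sqrt 2) y a * gauss_kernel (\<sigma> * sqrt 2) y b"
proof -
  note P = prod_kernel[OF assms]
  have s: "(\<sigma> / sqrt 2)\<^sup>2 = \<sigma>\<^sup>2 / 2" by (simp add: power_divide)
  have s2: "(\<sigma> * sqrt 2)\<^sup>2 = 2 * \<sigma>\<^sup>2" by (simp add: power_mult_distrib)
  have i: "rkhs_inner (gauss_kernel (\<sigma> / sqrt 2))
        (\<lambda>z. gauss_kernel \<sigma> x z * gauss_kernel \<sigma> y z)
        (\<lambda>z. gauss_kernel \<sigma> a z * gauss_kernel \<sigma> b z)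
      = exp (- ((norm (x - y))\<^sup>2 / (4 * \<sigma>\<^sup>2))) * exp (- ((norm (a - b))\<^sup>2 / (4 * \<sigma>\<^sup>2)))
        * gauss_kernel (\<sigma> / sqrt 2) (scaleR (1/2) (x + y)) (scaleR (1/2) (a + b))"
    unfolding P by (rule inner_single[OF gk_sym])
  have "gauss_kernel (\<sigma> * sqrt 2) x a * gauss_kernel (\<sigma> * sqrt 2) x b
        * gauss_kernel (\<sigma> * sqrt 2) y a * gauss_kernel (\<sigma> * sqrt 2) y b
      = exp (- (((norm (x - a))\<^sup>2 + (norm (x - b))\<^sup>2 + (norm (y - a))\<^sup>2 + (norm (y - b))\<^sup>2) / (4 * \<sigma>\<^sup>2)))"
    unfolding gauss_kernel_def s2 by (simp add: exp_add[symmetric] add_divide_distrib)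
  also have "\<dots> = exp (- ((norm (x - y))\<^sup>2 / (4 * \<sigma>\<^sup>2))) * exp (- ((norm (a - b))\<^sup>2 / (4 * \<sigma>\<^sup>2)))
        * gauss_kernel (\<sigma> / sqrt 2) (scaleR (1/2) (x + y)) (scaleR (1/2) (a + b))"
    unfolding sq_id2 gauss_kernel_def s ar2[OF assms] exp_add by (rule refl)
  finally have eq: "gauss_kernel (\<sigma> * sqrt 2) x a * gauss_kernel (\<sigma> * sqrt 2) x b
        * gauss_kernel (\<sigma> * sqrt 2) y a * gauss_kernel (\<sigma> * sqrt 2) y b
      = exp (- ((norm (x - y))\<^sup>2 / (4 * \<sigma>\<^sup>2))) * exp (- ((norm (a - b))\<^sup>2 / (4 * \<sigma>\<^sup>2)))
        * gauss_kernel (\<sigma> / sqrt 2) (scaleR (1/2) (x + y)) (scaleR (1/2) (a + b))" .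
  show ?thesis
  proof (intro conjI)
    show "(\<lambda>z. gauss_kernel \<sigma> x z * gauss_kernel \<sigma> y z) \<in> kernel_span (gauss_kernel (\<sigma> / sqrt 2))"
      unfolding P by (rule in_span)
    show "(\<lambda>z. gauss_kernel \<sigma> a z * gauss_kernel \<sigma> b z) \<in> kernel_span (gauss_kernel (\<sigma> / sqrt 2))"
      unfolding P by (rule in_span)
  qed (simp only: i eq)
qed

end
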